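(* Let $\mu,\lambda$ be positive integers with $\lambda\ge e\mu$. Let $(X_t)_{t\ge0}$ be a random process with deterministic initial value $X_0\in\{1,\dots,\mu\}$ such that for every $t\ge1$, conditionally on $X_0,\dots,X_{t-1}$, $X_t$ has the law of $\min\{\mu,B\}$ with $B\sim\mathrm{Bin}(\lambda,\frac{X_{t-1}}{e\mu})$. Then for all $t\in\mathbb{N}$ and all $\Delta>0$, \[\Pr\big[\exists\,\tau\in\{1,\dots,t\}:\ X_\tau<X_0-\Delta\big]\le\frac{tX_0}{\Delta^2}.\]
   Context: $\mathrm{Bin}(m,p)$ denotes the binomial distribution with $m$ trials and success probability $p$. *)

theory Defs
  imports "HOL-Probability.Probability"
begin

definition step_law :: "nat \<Rightarrow> nat \<Rightarrow> nat \<Rightarrow> nat pmf" where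
  "step_law mu lam x =
     map_pmf (\<lambda>b. min mu b) (binomial_pmf lam (real x / (exp 1 * real mu)))"

end

theory Submission
  imports Defs
begin

lemma bsum0: "(\<Sum>k\<le>n. real (n choose k) * p^k * (1-p)^(n-k)) = 1"
  using binomial_ring[of p "1-p" n] by simp

lemma shift_aux:
  fixes a b C C' p q :: real
  assumes h: "a * C = b * C'"
  shows "a * (C * p^Suc k * q) = (b * p) * (C' * p^k * q)"
proof -
  have "a * (C * p^Suc k * q) = (a * C) * (p * p^k * q)" by (simp add: mult_ac)
  also have "\<dots> = (b * C') * (p * p^k * q)" by (simp only: h)
  also have "\<dots> = (b * p) * (C' * p^k * q)" by (simp add: mult_ac)
  finally show ?thesis .
qed

lemma sbin: "real (Suc k) * real (Suc m choose Suc k) = real (Suc m) * real (m choose k)"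
  using Suc_times_binomial[of k m] by (metis of_nat_mult)

lemma bsum1: "(\<Sum>k\<le>n. real k * (real (n choose k) * p^k * (1-p)^(n-k))) = real n * p"
proof (cases n)
  case 0 then show ?thesis by simp
next
  case (Suc m)
  have "(\<Sum>k\<le>Suc m. real k * (real (Suc m choose k) * p^k * (1-p)^(Suc m-k)))
      = (\<Sum>k\<le>m. real (Suc k) * (real (Suc m choose Suc k) * p^Suc k * (1-p)^(m-k)))"
    by (subst sum.atMost_Suc_shift) (simp del: of_nat_Suc)
  also have "\<dots> = (\<Sum>k\<le>m. (real (Suc m) * p) * (real (m choose k) * p^k * (1-p)^(m-k)))"
    by (rule sum.cong[OF refl], rule shift_aux, rule sbin)
  also have "\<dots> = real (Suc m) * p" by (simp only: sum_distrib_left[symmetric] bsum0)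
  finally show ?thesis using Suc by simp
qed

lemma bsum2: "(\<Sum>k\<le>n. real k * (real k - 1) * (real (n choose k) * p^k * (1-p)^(n-k))) = real n * (real n - 1) * p^2"
proof (cases n)
  case 0 then show ?thesis by simp
next
  case (Suc m)
  have "(\<Sum>k\<le>Suc m. real k * (real k - 1) * (real (Suc m choose k) * p^k * (1-p)^(Suc m-k)))
      = (\<Sum>k\<le>m. real (Suc k) * (real (Suc k) - 1) * (real (Suc m choose Suc k) * p^Suc k * (1-p)^(m-k)))"
    by (subst sum.atMost_Suc_shift) (simp del: of_nat_Suc)
  also have "\<dots> = (\<Sum>k\<le>m. (real (Suc m) * p) * (real k * (real (m choose k) * p^k * (1-p)^(m-k))))"
  proof (rule sum.cong[OF refl])
    fix k
    have e: "real (Suc k) - 1 = real k" by simp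
    have "real (Suc k) * (real (Suc k) - 1) * (real (Suc m choose Suc k) * p^Suc k * (1-p)^(m-k))
       = real k * (real (Suc k) * (real (Suc m choose Suc k) * p^Suc k * (1-p)^(m-k)))"
      by (simp only: e mult_ac)
    also have "\<dots> = real k * ((real (Suc m) * p) * (real (m choose k) * p^k * (1-p)^(m-k)))"
      by (simp only: shift_aux[OF sbin])
    also have "\<dots> = (real (Suc m) * p) * (real k * (real (m choose k) * p^k * (1-p)^(m-k)))"
      by (simp only: mult_ac)
    finally show "real (Suc k) * (real (Suc k) - 1) * (real (Suc m choose Suc k) * p^Suc k * (1-p)^(m-k))
       = (real (Suc m) * p) * (real k * (real (m choose k) * p^k * (1-p)^(m-k)))" .
  qed
  also have "\<dots> = real (Suc m) * p * (real m * p)" by (simp only: sum_distrib_left[symmetric] bsum1)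
  finally show ?thesis using Suc by (simp add: power2_eq_square algebra_simps)
qed

lemma bsq: "(\<Sum>k\<le>n. (a - real k)^2 * (real (n choose k) * p^k * (1-p)^(n-k)))
   = (a - real n * p)^2 + real n * p * (1 - p)"
proof -
  define w where "w k = real (n choose k) * p^k * (1-p)^(n-k)" for k
  have s0: "(\<Sum>k\<le>n. w k) = 1" unfolding w_def by (rule bsum0)
  have s1: "(\<Sum>k\<le>n. real k * w k) = real n * p" unfolding w_def by (rule bsum1)
  have s2: "(\<Sum>k\<le>n. real k * (real k - 1) * w k) = real n * (real n - 1) * p^2" unfolding w_def by (rule bsum2)
  have e: "(a - real k)^2 * w k = a^2 * w k - 2*a * (real k * w k) + real k * (real k - 1) * w k + real k * w k" for k
    by (simp add: power2_eq_square algebra_simps)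
  have "(\<Sum>k\<le>n. (a - real k)^2 * w k) = a^2 * (\<Sum>k\<le>n. w k) - 2*a*(\<Sum>k\<le>n. real k * w k)
     + (\<Sum>k\<le>n. real k * (real k - 1) * w k) + (\<Sum>k\<le>n. real k * w k)"
    unfolding e by (simp only: sum.distrib sum_subtractf sum_distrib_left)
  also have "\<dots> = a^2 - 2*a*(real n * p) + real n * (real n - 1) * p^2 + real n * p"
    by (simp only: s0 s1 s2)
  also have "\<dots> = (a - real n * p)^2 + real n * p * (1 - p)"
    by (simp add: power2_eq_square algebra_simps)
  finally show ?thesis unfolding w_def .
qed


lemma pw: fixes a m k :: real
  assumes "0 < a" "a < m" "0 \<le> k"
  shows "(max 0 (a - k))^2 \<le> (a/m)^2 * (m - k)^2"
proof (cases "a \<le> k")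
  case True then show ?thesis by simp
next
  case False
  have m0: "0 < m" using assms by simp
  have "a * k \<le> m * k" using assms by (intro mult_right_mono) auto
  then have "a * k / m \<le> k" using m0 by (simp add: divide_le_eq mult.commute)
  then have "a - k \<le> (a/m) * (m - k)" using m0 by (simp add: right_diff_distrib)
  moreover have "0 \<le> a - k" using False by simp
  ultimately have "(a - k)^2 \<le> ((a/m) * (m - k))^2" by (rule power_mono)
  then show ?thesis using False by (simp only: power_mult_distrib max_def) simp
qed

lemma key:
  fixes a x p :: real and n :: nat
  assumes p0: "0 \<le> p" and p1: "p \<le> 1" and a0: "0 < a" and x0: "0 \<le> x" and xm: "x \<le> real n * p"
  shows "(\<Sum>k\<le>n. (max 0 (a - real k))^2 * (real (n choose k) * p^k * (1-p)^(n-k)))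
     \<le> (max 0 (a - x))^2 + a"
proof -
  define w where "w k = real (n choose k) * p^k * (1-p)^(n-k)" for k
  define m where "m = real n * p"
  have w0: "0 \<le> w k" for k unfolding w_def using p0 p1 by simp
  have m0: "0 \<le> m" unfolding m_def using p0 by simp
  have var: "m * (1 - p) \<le> m" using m0 p0 by (simp add: mult_left_le)
  show ?thesis
  proof (cases "m \<le> a")
    case True
    have "(\<Sum>k\<le>n. (max 0 (a - real k))^2 * w k) \<le> (\<Sum>k\<le>n. (a - real k)^2 * w k)"
      by (rule sum_mono, rule mult_right_mono[OF _ w0]) (simp add: max_def)
    also have "\<dots> = (a - m)^2 + m * (1 - p)" unfolding w_def m_def by (rule bsq)
    also have "(a - m)^2 \<le> (max 0 (a - x))^2"
    proof -
      have h1: "0 \<le> a - m" and h2: "a - m \<le> max 0 (a - x)" using True xm unfolding m_def by auto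
      show ?thesis by (rule power_mono[OF h2 h1])
    qed
    finally show ?thesis using var True unfolding w_def by linarith
  next
    case False
    then have am: "a < m" by simp
    have "(\<Sum>k\<le>n. (max 0 (a - real k))^2 * w k) \<le> (\<Sum>k\<le>n. (a/m)^2 * ((m - real k)^2 * w k))"
      by (rule sum_mono) (simp only: mult.assoc[symmetric], rule mult_right_mono[OF pw[OF a0 am] w0], simp)
    also have "\<dots> = (a/m)^2 * ((m - m)^2 + m * (1 - p))"
      unfolding sum_distrib_left[symmetric] w_def m_def by (simp only: bsq)
    also have "\<dots> \<le> (a/m)^2 * m" using var by (intro mult_left_mono) auto
    also have "\<dots> = a * (a / m)" using am a0 by (simp add: power2_eq_square)
    also have "\<dots> \<le> a * 1" using am a0 by (intro mult_left_mono) auto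
    finally have "(\<Sum>k\<le>n. (max 0 (a - real k))^2 * w k) \<le> a" by simp
    moreover have "0 \<le> (max 0 (a - x))^2" by simp
    ultimately show ?thesis unfolding w_def by linarith
  qed
qed


lemma set_step: "set_pmf (step_law mu lam x) \<subseteq> {..mu}"
  by (auto simp: step_law_def)

lemma step_exp:
  assumes mu0: "0 < mu" and lam: "exp 1 * real mu \<le> real lam" and xm: "x \<le> mu"
    and x01: "1 \<le> x0" and x0m: "x0 \<le> mu"
  shows "(\<Sum>y\<le>mu. pmf (step_law mu lam x) y * (max 0 (real x0 - real y))^2)
          \<le> (max 0 (real x0 - real x))^2 + real x0"
proof -
  define p where "p = real x / (exp 1 * real mu)"
  define f where "f y = (max 0 (real x0 - real y))^2" for y :: nat
  have em: "0 < exp 1 * real mu" using mu0 by simp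
  have p0: "0 \<le> p" unfolding p_def using em by simp
  have "real x \<le> exp 1 * real mu"
  proof -
    have "real x \<le> 1 * real mu" using xm by simp
    also have "\<dots> \<le> exp 1 * real mu" by (intro mult_right_mono) auto
    finally show ?thesis .
  qed
  then have p1: "p \<le> 1" unfolding p_def using em by simp
  have xl: "real x \<le> real lam * p"
  proof -
    have "real x * (exp 1 * real mu) \<le> real x * real lam" using lam by (intro mult_left_mono) auto
    then show ?thesis unfolding p_def using em by (simp add: le_divide_eq mult.commute)
  qed
  have sB: "set_pmf (binomial_pmf lam p) \<subseteq> {..lam}"
    using p0 p1 by (auto simp: set_pmf_binomial_eq)
  have fg: "f (min mu k) = f k" for k using x0m unfolding f_def by (auto simp: min_def max_def)
  have "(\<Sum>y\<le>mu. pmf (step_law mu lam x) y * f y) = (\<Sum>y\<le>mu. f y * pmf (step_law mu lam x) y)"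
    by (simp add: mult.commute)
  also have "\<dots> = measure_pmf.expectation (step_law mu lam x) f"
    by (rule integral_measure_pmf_real[symmetric]) (use set_step in auto)
  also have "\<dots> = measure_pmf.expectation (binomial_pmf lam p) (\<lambda>k. f (min mu k))"
    unfolding step_law_def p_def by simp
  also have "\<dots> = (\<Sum>k\<le>lam. f (min mu k) * pmf (binomial_pmf lam p) k)"
    by (rule integral_measure_pmf_real) (use sB in auto)
  also have "\<dots> = (\<Sum>k\<le>lam. (max 0 (real x0 - real k))^2 * (real (lam choose k) * p^k * (1-p)^(lam-k)))"
    by (simp only: fg) (simp add: f_def p0 p1)
  also have "\<dots> \<le> (max 0 (real x0 - real x))^2 + real x0"
    by (rule key) (use p0 p1 x01 xl in auto)
  finally show ?thesis unfolding f_def .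
qed


theorem lemma6:
  fixes M :: "'w measure" and X :: "nat \<Rightarrow> 'w \<Rightarrow> nat"
    and mu lam x0 t :: nat and \<Delta> :: real
  assumes "prob_space M"
    and "0 < mu" and "0 < lam" and "exp 1 * real mu \<le> real lam"
    and "1 \<le> x0" and "x0 \<le> mu"
    and meas: "\<And>s. X s \<in> measurable M (count_space UNIV)"
    and init: "\<And>\<omega>. \<omega> \<in> space M \<Longrightarrow> X 0 \<omega> = x0"
    and trans: "\<And>s xs y. 1 \<le> s \<Longrightarrow> length xs = s \<Longrightarrow>
        measure M {\<omega> \<in> space M. (\<forall>i<s. X i \<omega> = xs ! i) \<and> X s \<omega> = y}
        = measure M {\<omega> \<in> space M. \<forall>i<s. X i \<omega> = xs ! i}
          * pmf (step_law mu lam (xs ! (s - 1))) y"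
    and "0 < \<Delta>"
  shows "measure M {\<omega> \<in> space M. \<exists>\<tau>\<in>{1..t}. real (X \<tau> \<omega>) < real x0 - \<Delta>}
         \<le> real t * real x0 / \<Delta>\<^sup>2"
proof -
  interpret P: prob_space M by fact
  note hyps = assms(2-6)
  have D0: "0 < \<Delta>" by fact
  define c where "c = real x0 - \<Delta>"
  define q where "q y = (max 0 (real x0 - real y))^2" for y :: nat
  define \<phi> where "\<phi> s y = (real s * real x0 + q y) / \<Delta>^2" for s y :: nat
  define cyl where "cyl xs = {\<omega>\<in>space M. \<forall>i<length xs. X i \<omega> = xs!i}" for xs
  define E where "E n s = {\<omega>\<in>space M. \<exists>\<tau>\<in>{n..<n+s}. real (X \<tau> \<omega>) < c}" for n s
  have predX: "{\<omega>\<in>space M. P (X i \<omega>)} \<in> sets M" for P i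
  proof -
    have "X i -` {y. P y} \<inter> space M \<in> sets M" by (rule measurable_sets[OF meas]) simp
    moreover have "X i -` {y. P y} \<inter> space M = {\<omega>\<in>space M. P (X i \<omega>)}" by auto
    ultimately show ?thesis by simp
  qed
  have cyl_sets: "cyl xs \<in> sets M" for xs
  proof -
    have "cyl xs = {\<omega>\<in>space M. \<forall>i\<in>{..<length xs}. X i \<omega> = xs!i}" unfolding cyl_def by auto
    also have "\<dots> \<in> sets M" by (rule sets.sets_Collect_finite_All) (use predX in auto)
    finally show ?thesis .
  qed
  have E_sets: "E n s \<in> sets M" for n s
    unfolding E_def by (rule sets.sets_Collect_finite_Ex) (use predX in auto)
  have phi0: "0 \<le> \<phi> s y" for s y unfolding \<phi>_def q_def by simp
  have phi1: "1 \<le> \<phi> s y" if "real y < c" for s y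
  proof -
    have "\<Delta> \<le> max 0 (real x0 - real y)" using that unfolding c_def by simp
    then have "\<Delta>^2 \<le> q y" unfolding q_def using D0 by (intro power_mono) auto
    moreover have "0 \<le> real s * real x0" by simp
    ultimately have "\<Delta>^2 \<le> real s * real x0 + q y" by linarith
    then show ?thesis unfolding \<phi>_def using D0 by simp
  qed
  have claim: "\<forall>n xs. length xs = n \<longrightarrow> 1 \<le> n \<longrightarrow> last xs \<le> mu \<longrightarrow>
      measure M (cyl xs \<inter> E n s) \<le> measure M (cyl xs) * \<phi> s (last xs)" for s
  proof (induction s)
    case 0
    then show ?case unfolding E_def using phi0 by (simp add: mult_nonneg_nonneg)
  next
    case (Suc s)
    show ?case
    proof (intro allI impI)
      fix n xs assume len: "length xs = n" and n1: "1 \<le> n" and lm: "last xs \<le> mu"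
      define x where "x = last xs"
      define K where "K = step_law mu lam x"
      have xn: "xs ! (n - 1) = x" unfolding x_def using len n1
        by (metis One_nat_def last_conv_nth list.size(3) not_one_le_zero)
      have cyl_snoc: "cyl (xs@[y]) = {\<omega>\<in>space M. (\<forall>i<n. X i \<omega> = xs!i) \<and> X n \<omega> = y}" for y
        unfolding cyl_def using len by (auto simp: nth_append less_Suc_eq)
      have cyl_xs: "cyl xs = {\<omega>\<in>space M. \<forall>i<n. X i \<omega> = xs!i}" unfolding cyl_def len ..
      have tr: "measure M (cyl (xs@[y])) = measure M (cyl xs) * pmf K y" for y
        unfolding cyl_snoc cyl_xs K_def using trans[OF n1 len, of y] xn by simp
      define F where "F y = (if real y < c then cyl (xs@[y]) else cyl (xs@[y]) \<inter> E (Suc n) s)" for y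
      have F_sets: "F y \<in> sets M" for y unfolding F_def using cyl_sets E_sets by auto
      have F_le: "measure M (F y) \<le> measure M (cyl xs) * pmf K y * \<phi> s y" if ym: "y \<le> mu" for y
      proof (cases "real y < c")
        case True
        have "measure M (F y) = measure M (cyl xs) * pmf K y * 1" using True by (simp add: F_def tr)
        also have "\<dots> \<le> measure M (cyl xs) * pmf K y * \<phi> s y"
          by (intro mult_left_mono phi1 True) auto
        finally show ?thesis .
      next
        case False
        have "measure M (F y) = measure M (cyl (xs@[y]) \<inter> E (Suc n) s)" using False unfolding F_def by simp
        also have "\<dots> \<le> measure M (cyl (xs@[y])) * \<phi> s (last (xs@[y]))"
          using Suc.IH[rule_format, of "xs@[y]"] len ym by simp
        also have "\<dots> = measure M (cyl xs) * pmf K y * \<phi> s y" by (simp add: tr)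
        finally show ?thesis .
      qed
      define N where "N = cyl xs \<inter> {\<omega>. mu < X n \<omega>}"
      have N_eq: "N = (\<Union>y\<in>{mu<..}. cyl (xs@[y]))" unfolding N_def cyl_snoc cyl_xs by auto
      have N_null: "N \<in> null_sets M"
        unfolding N_eq
      proof (rule null_sets_UN')
        fix y assume "y \<in> {mu<..}"
        then have "pmf K y = 0" using set_step[of mu lam x] unfolding K_def
          by (metis atMost_iff greaterThan_iff not_le set_pmf_iff subset_eq)
        then have "measure M (cyl (xs@[y])) = 0" by (simp add: tr)
        then show "cyl (xs@[y]) \<in> null_sets M" using cyl_sets
          by (simp add: P.emeasure_eq_measure null_setsI)
      qed simp
      have sub: "cyl xs \<inter> E n (Suc s) \<subseteq> (\<Union>y\<in>{..mu}. F y) \<union> N"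
      proof
        fix \<omega> assume w: "\<omega> \<in> cyl xs \<inter> E n (Suc s)"
        define y where "y = X n \<omega>"
        show "\<omega> \<in> (\<Union>y\<in>{..mu}. F y) \<union> N"
        proof (cases "mu < y")
          case True then show ?thesis using w unfolding N_def y_def by auto
        next
          case False
          have wc: "\<omega> \<in> cyl (xs@[y])" using w unfolding cyl_snoc cyl_xs y_def by auto
          from w obtain \<tau> where tau: "\<tau> \<in> {n..<n+Suc s}" "real (X \<tau> \<omega>) < c" "\<omega> \<in> space M"
            unfolding E_def by auto
          have "\<omega> \<in> F y"
          proof (cases "real y < c")
            case True then show ?thesis using wc unfolding F_def by simp
          next
            case False
            then have "\<tau> \<noteq> n" using tau unfolding y_def by auto
            then have "\<tau> \<in> {Suc n..<Suc n + s}" using tau by auto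
            then have "\<omega> \<in> E (Suc n) s" unfolding E_def using tau by auto
            then show ?thesis using wc False unfolding F_def by simp
          qed
          then show ?thesis using False by auto
        qed
      qed
      have "measure M (cyl xs \<inter> E n (Suc s)) \<le> measure M ((\<Union>y\<in>{..mu}. F y) \<union> N)"
        by (rule P.finite_measure_mono[OF sub]) (use F_sets N_null in auto)
      also have "\<dots> = measure M (\<Union>y\<in>{..mu}. F y)"
        by (rule measure_Un_null_set[OF _ N_null]) (use F_sets in auto)
      also have "\<dots> \<le> (\<Sum>y\<le>mu. measure M (F y))"
        by (rule measure_UNION_le) (use F_sets in auto)
      also have "\<dots> \<le> (\<Sum>y\<le>mu. measure M (cyl xs) * pmf K y * \<phi> s y)"
        by (rule sum_mono, rule F_le) simp
      also have "\<dots> = measure M (cyl xs) * (\<Sum>y\<le>mu. pmf K y * \<phi> s y)"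
        by (simp add: sum_distrib_left mult.assoc)
      also have "(\<Sum>y\<le>mu. pmf K y * \<phi> s y) \<le> \<phi> (Suc s) x"
      proof -
        have s1: "(\<Sum>y\<le>mu. pmf K y) = 1" unfolding K_def by (rule sum_pmf_eq_1) (auto simp: set_step)
        have ex: "(\<Sum>y\<le>mu. pmf K y * q y) \<le> q x + real x0"
          unfolding K_def q_def by (rule step_exp) (use hyps lm x_def in auto)
        have "(\<Sum>y\<le>mu. pmf K y * \<phi> s y)
            = (real s * real x0 * (\<Sum>y\<le>mu. pmf K y) + (\<Sum>y\<le>mu. pmf K y * q y)) / \<Delta>^2"
          unfolding \<phi>_def by (simp add: sum_divide_distrib[symmetric] sum_distrib_left sum.distrib algebra_simps)
        also have "\<dots> \<le> (real s * real x0 + q x + real x0) / \<Delta>^2"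
          unfolding s1 using ex D0 by (intro divide_right_mono) auto
        also have "\<dots> = \<phi> (Suc s) x" unfolding \<phi>_def by (simp add: algebra_simps)
        finally show ?thesis .
      qed
      then have "measure M (cyl xs) * (\<Sum>y\<le>mu. pmf K y * \<phi> s y) \<le> measure M (cyl xs) * \<phi> (Suc s) x"
        by (intro mult_left_mono) auto
      finally show "measure M (cyl xs \<inter> E n (Suc s)) \<le> measure M (cyl xs) * \<phi> (Suc s) (last xs)"
        unfolding x_def .
    qed
  qed
  have c0: "cyl [x0] = space M" unfolding cyl_def using init by auto
  have E1: "cyl [x0] \<inter> E 1 t = {\<omega> \<in> space M. \<exists>\<tau>\<in>{1..t}. real (X \<tau> \<omega>) < real x0 - \<Delta>}"
    unfolding c0 E_def c_def by auto
  have "measure M (cyl [x0] \<inter> E 1 t) \<le> measure M (cyl [x0]) * \<phi> t (last [x0])"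
    using claim[of t, rule_format, of "[x0]"] hyps by simp
  also have "\<dots> = real t * real x0 / \<Delta>\<^sup>2" unfolding c0 \<phi>_def q_def by (simp add: P.prob_space)
  finally show ?thesis unfolding E1 .
qed

end
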